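(* Let $\mathcal{A}=(Q,\Sigma,\delta)$ be a synchronizing DFA with $n$ states. If there is a letter $a\in\Sigma$ of rank $r=|Q.a|\le\sqrt[3]{6n-6}$, then $\mathrm{rt}(\mathcal{A})\le(n-1)^2$.
   Context: A DFA $\mathcal{A}=(Q,\Sigma,\delta)$ has finite state set $Q$ with $|Q|=n$, finite alphabet $\Sigma$, total transition function extended to words; $Q.w=\{\delta(q,w)\mid q\in Q\}$. The rank of a word $w$ is $|Q.w|$. A reset word is a word of rank $1$; $\mathcal{A}$ is synchronizing if one exists, and $\mathrm{rt}(\mathcal{A})$ is the length of a shortest reset word. *)

theory Defs
  imports Complex_Main
begin

definition dfa :: "'q set \<Rightarrow> 's set \<Rightarrow> ('q \<Rightarrow> 's \<Rightarrow> 'q) \<Rightarrow> bool" where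
  "dfa Q Sig delta \<longleftrightarrow> finite Q \<and> Q \<noteq> {} \<and> finite Sig \<and>
     (\<forall>q\<in>Q. \<forall>a\<in>Sig. delta q a \<in> Q)"

definition delta_word :: "('q \<Rightarrow> 's \<Rightarrow> 'q) \<Rightarrow> 'q \<Rightarrow> 's list \<Rightarrow> 'q" where
  "delta_word delta q w = foldl delta q w"

definition image_word :: "'q set \<Rightarrow> ('q \<Rightarrow> 's \<Rightarrow> 'q) \<Rightarrow> 's list \<Rightarrow> 'q set" where
  "image_word Q delta w = (\<lambda>q. delta_word delta q w) ` Q"

definition rank :: "'q set \<Rightarrow> ('q \<Rightarrow> 's \<Rightarrow> 'q) \<Rightarrow> 's list \<Rightarrow> nat" where
  "rank Q delta w = card (image_word Q delta w)"

definition reset_word :: "'q set \<Rightarrow> 's set \<Rightarrow> ('q \<Rightarrow> 's \<Rightarrow> 'q) \<Rightarrow> 's list \<Rightarrow> bool" where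
  "reset_word Q Sig delta w \<longleftrightarrow> set w \<subseteq> Sig \<and> rank Q delta w = 1"

definition synchronizing :: "'q set \<Rightarrow> 's set \<Rightarrow> ('q \<Rightarrow> 's \<Rightarrow> 'q) \<Rightarrow> bool" where
  "synchronizing Q Sig delta \<longleftrightarrow> (\<exists>w. reset_word Q Sig delta w)"

definition rt :: "'q set \<Rightarrow> 's set \<Rightarrow> ('q \<Rightarrow> 's \<Rightarrow> 'q) \<Rightarrow> nat" where
  "rt Q Sig delta = (LEAST k. \<exists>w. reset_word Q Sig delta w \<and> length w = k)"

end

theory Submission
  imports Defs "HOL-Library.Function_Algebras" "HOL-Computational_Algebra.Polynomial"
begin

instantiation "fun" :: (type, real_vector) real_vector
begin
definition scaleR_fun :: "real \<Rightarrow> ('a \<Rightarrow> 'b) \<Rightarrow> 'a \<Rightarrow> 'b" where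
  "scaleR_fun c f = (\<lambda>x. c *\<^sub>R f x)"
instance
  by standard (auto simp: scaleR_fun_def fun_eq_iff scaleR_add_right scaleR_add_left)
end

lemma fun_sum_apply: "(sum f A) x = (\<Sum>i\<in>A. f i x)"
  by (induction A rule: infinite_finite_induct) auto

lemma linear_eval: "linear (\<lambda>f::'a \<Rightarrow> real. f p)"
  by (rule linearI) (auto simp: scaleR_fun_def)

lemma vanish_span:
  fixes l :: "'a::real_vector \<Rightarrow> real"
  assumes "linear l" "\<forall>v\<in>S. l v = 0" "v \<in> span S"
  shows "l v = 0"
proof -
  have "l ` span S = span (l ` S)" using span_linear_image[OF assms(1)] by simp
  also have "l ` S \<subseteq> {0}" using assms(2) by auto
  hence "span (l ` S) \<subseteq> span {0}" by (rule span_mono)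
  finally show ?thesis using assms(3) by auto
qed

lemma card_tri: "card {(i::nat,j). i \<le> j \<and> j \<le> b} = (b+2) choose 2"
proof (induction b)
  case 0
  have "{(i::nat,j). i \<le> j \<and> j \<le> 0} = {(0,0)}" by auto
  then show ?case by (simp add: choose_two)
next
  case (Suc b)
  have "{(i::nat,j). i \<le> j \<and> j \<le> Suc b} = {(i,j). i \<le> j \<and> j \<le> b} \<union> (\<lambda>i. (i, Suc b)) ` {..Suc b}"
    by auto
  moreover have "card ((\<lambda>i. (i, Suc b)) ` {..Suc b}) = Suc (Suc b)"
    by (subst card_image) (auto simp: inj_on_def)
  moreover have "finite {(i::nat,j). i \<le> j \<and> j \<le> b}"
    by (rule finite_subset[of _ "{..b} \<times> {..b}"]) auto
  moreover have "{(i::nat,j). i \<le> j \<and> j \<le> b} \<inter> (\<lambda>i. (i, Suc b)) ` {..Suc b} = {}"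
    by auto
  ultimately have "card {(i::nat,j). i \<le> j \<and> j \<le> Suc b} = card {(i::nat,j). i \<le> j \<and> j \<le> b} + Suc (Suc b)"
    using card_Un_disjoint[of "{(i::nat,j). i \<le> j \<and> j \<le> b}" "(\<lambda>i. (i, Suc b)) ` {..Suc b}"]
    by simp
  then show ?case using Suc by (simp add: numeral_2_eq_2)
qed

definition sigm :: "nat \<times> nat \<Rightarrow> real \<times> real \<Rightarrow> real" where
  "sigm ij p = fst p ^ fst ij * snd p ^ snd ij + fst p ^ snd ij * snd p ^ fst ij"

lemma prod_in_span:
  fixes t :: "'q \<Rightarrow> real"
  assumes fin: "finite B" and cB: "card B = b"
  shows "(\<lambda>p. (\<Prod>z\<in>B. fst p - t z) * (\<Prod>z\<in>B. snd p - t z))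
           \<in> span (sigm ` {(i,j). i \<le> j \<and> j \<le> b})"
proof -
  define P where "P = (\<Prod>z\<in>B. [:- t z, 1:])"
  define d where "d = degree P"
  define c where "c = coeff P"
  have pe: "(\<Prod>z\<in>B. x - t z) = (\<Sum>i\<le>d. c i * x ^ i)" for x
  proof -
    have "poly P x = (\<Prod>z\<in>B. x - t z)" by (simp add: P_def poly_prod)
    thus ?thesis by (simp add: poly_altdef d_def c_def)
  qed
  have "d \<le> sum (degree \<circ> (\<lambda>z. [:- t z, 1:])) B"
    unfolding d_def P_def by (rule degree_prod_sum_le[OF fin])
  also have "\<dots> = b" using cB by simp
  finally have db: "d \<le> b" .
  let ?E = "sigm ` {(i,j). i \<le> j \<and> j \<le> b}"
  have sig_sym: "sigm (i,j) = sigm (j,i)" for i j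
    by (auto simp: sigm_def fun_eq_iff)
  have sin: "sigm (i,j) \<in> span ?E" if "i \<le> d" "j \<le> d" for i j
  proof (cases "i \<le> j")
    case True
    then show ?thesis using that db by (intro span_base) auto
  next
    case False
    then show ?thesis using that db sig_sym[of i j] by (intro span_base) auto
  qed
  have eq: "(\<lambda>p. (\<Prod>z\<in>B. fst p - t z) * (\<Prod>z\<in>B. snd p - t z))
     = (\<Sum>i\<le>d. \<Sum>j\<le>d. (c i * c j / 2) *\<^sub>R sigm (i,j))"
  proof
    fix p :: "real \<times> real"
    obtain s u where p: "p = (s,u)" by (cases p)
    have "(\<Sum>i\<le>d. \<Sum>j\<le>d. (c i * c j / 2) *\<^sub>R sigm (i,j)) p
        = (\<Sum>i\<le>d. \<Sum>j\<le>d. (c i * c j / 2) * (s ^ i * u ^ j + s ^ j * u ^ i))"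
      by (simp add: fun_sum_apply scaleR_fun_def sigm_def p)
    also have "\<dots> = (\<Sum>i\<le>d. \<Sum>j\<le>d. (c i * c j / 2) * (s ^ i * u ^ j))
                    + (\<Sum>i\<le>d. \<Sum>j\<le>d. (c i * c j / 2) * (s ^ j * u ^ i))"
      by (simp add: distrib_left sum.distrib)
    also have "(\<Sum>i\<le>d. \<Sum>j\<le>d. (c i * c j / 2) * (s ^ j * u ^ i))
             = (\<Sum>i\<le>d. \<Sum>j\<le>d. (c i * c j / 2) * (s ^ i * u ^ j))"
      by (subst sum.swap) (simp add: mult.commute)
    also have "(\<Sum>i\<le>d. \<Sum>j\<le>d. (c i * c j / 2) * (s ^ i * u ^ j))
             + (\<Sum>i\<le>d. \<Sum>j\<le>d. (c i * c j / 2) * (s ^ i * u ^ j))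
             = (\<Sum>i\<le>d. \<Sum>j\<le>d. (c i * s ^ i) * (c j * u ^ j))"
      by (simp add: sum.distrib[symmetric] field_simps)
    also have "\<dots> = (\<Sum>i\<le>d. c i * s ^ i) * (\<Sum>j\<le>d. c j * u ^ j)"
      by (simp add: sum_product)
    finally show "(\<Prod>z\<in>B. fst p - t z) * (\<Prod>z\<in>B. snd p - t z)
          = (\<Sum>i\<le>d. \<Sum>j\<le>d. (c i * c j / 2) *\<^sub>R sigm (i,j)) p"
      by (simp add: pe p)
  qed
  show ?thesis unfolding eq
    by (intro span_sum span_scale sin) auto
qed

lemma pin:
  fixes Om :: "'q set" and x y :: "nat \<Rightarrow> 'q" and B :: "nat \<Rightarrow> 'q set"
  assumes fin: "finite Om"
    and h: "\<And>i. i < m \<Longrightarrow> x i \<in> Om \<and> y i \<in> Om \<and> B i \<subseteq> Om \<and> card (B i) = b \<and> x i \<notin> B i \<and> y i \<notin> B i"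
    and tri: "\<And>i j. i < j \<Longrightarrow> j < m \<Longrightarrow> x j \<in> B i \<or> y j \<in> B i"
  shows "m \<le> (b+2) choose 2"
proof -
  obtain f :: "'q \<Rightarrow> nat" and N where "f ` Om = {i. i < N}" "inj_on f Om"
    using finite_imp_inj_to_nat_seg[OF fin] by blast
  define t where "t = (\<lambda>z. real (f z))"
  have tinj: "t z \<noteq> t w" if "z \<in> Om" "w \<in> Om" "z \<noteq> w" for z w
    using \<open>inj_on f Om\<close> that by (auto simp: t_def inj_on_def)
  define phi where "phi i = (\<lambda>p::real\<times>real. (\<Prod>z\<in>B i. fst p - t z) * (\<Prod>z\<in>B i. snd p - t z))" for i
  define E where "E = sigm ` {(i,j). i \<le> j \<and> j \<le> b}"
  have finB: "finite (B i)" if "i < m" for i using h[OF that] fin finite_subset by blast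
  have inE: "phi i \<in> span E" if "i < m" for i
    unfolding phi_def E_def using prod_in_span[OF finB[OF that]] h[OF that] by blast
  have diag: "phi i (t (x i), t (y i)) \<noteq> 0" if "i < m" for i
  proof -
    have "(\<Prod>z\<in>B i. t (x i) - t z) \<noteq> 0"
      using h[OF that] tinj finB[OF that] by (subst prod_zero_iff) auto
    moreover have "(\<Prod>z\<in>B i. t (y i) - t z) \<noteq> 0"
      using h[OF that] tinj finB[OF that] by (subst prod_zero_iff) auto
    ultimately show ?thesis by (simp add: phi_def)
  qed
  have off: "phi i (t (x j), t (y j)) = 0" if "i < j" "j < m" for i j
  proof -
    have im: "i < m" using that by simp
    from tri[OF that] show ?thesis
    proof
      assume "x j \<in> B i"
      hence "(\<Prod>z\<in>B i. t (x j) - t z) = 0"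
        using finB[OF im] by (subst prod_zero_iff) auto
      thus ?thesis by (simp add: phi_def)
    next
      assume "y j \<in> B i"
      hence "(\<Prod>z\<in>B i. t (y j) - t z) = 0"
        using finB[OF im] by (subst prod_zero_iff) auto
      thus ?thesis by (simp add: phi_def)
    qed
  qed
  have ind: "independent (phi ` {..<j}) \<and> card (phi ` {..<j}) = j" if "j \<le> m" for j
    using that
  proof (induction j)
    case 0
    have "phi ` {..<0} = {}" by simp
    then show ?case by (metis card.empty independent_empty)
  next
    case (Suc j)
    hence jm: "j < m" by simp
    have van: "phi j \<notin> span (phi ` {..<j})"
    proof
      assume "phi j \<in> span (phi ` {..<j})"
      hence "(\<lambda>g::real\<times>real\<Rightarrow>real. g (t (x j), t (y j))) (phi j) = 0"
        by (rule vanish_span[OF linear_eval, rotated]) (auto intro: off jm)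
      thus False using diag[OF jm] by simp
    qed
    have nin: "phi j \<notin> phi ` {..<j}"
    proof
      assume "phi j \<in> phi ` {..<j}"
      hence "phi j \<in> span (phi ` {..<j})" by (rule span_base)
      with van show False by simp
    qed
    have "phi ` {..<Suc j} = insert (phi j) (phi ` {..<j})"
      by (simp add: lessThan_Suc)
    then show ?case using Suc van nin independent_insertI[OF van]
      by (simp add: card_insert_if)
  qed
  have fE: "finite E" unfolding E_def
    by (rule finite_imageI, rule finite_subset[of _ "{..b} \<times> {..b}"]) auto
  have "card (phi ` {..<m}) \<le> card E"
    using independent_span_bound[OF fE] ind[of m] inE by blast
  also have "card E \<le> card {(i::nat,j). i \<le> j \<and> j \<le> b}"
    unfolding E_def by (rule card_image_le, rule finite_subset[of _ "{..b} \<times> {..b}"]) auto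
  finally show ?thesis using ind[of m] card_tri[of b] by simp
qed


lemma dw_Nil[simp]: "delta_word d q [] = q"
  by (simp add: delta_word_def)
lemma dw_Cons[simp]: "delta_word d q (x#u) = delta_word d (d q x) u"
  by (simp add: delta_word_def)
lemma dw_append: "delta_word d q (u@v) = delta_word d (delta_word d q u) v"
  by (simp add: delta_word_def)
lemma dw_in: "dfa Q Sig d \<Longrightarrow> q \<in> Q \<Longrightarrow> set u \<subseteq> Sig \<Longrightarrow> delta_word d q u \<in> Q"
  by (induction u arbitrary: q) (auto simp: dfa_def)

definition img :: "('q \<Rightarrow> 's \<Rightarrow> 'q) \<Rightarrow> 'q set \<Rightarrow> 's list \<Rightarrow> 'q set" where
  "img d S w = (\<lambda>q. delta_word d q w) ` S"

lemma img_append: "img d S (u@v) = img d (img d S u) v"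
  by (auto simp: img_def dw_append image_image)
lemma img_Nil[simp]: "img d S [] = S"
  by (simp add: img_def)
lemma img_mono: "S \<subseteq> T \<Longrightarrow> img d S w \<subseteq> img d T w"
  by (auto simp: img_def)
lemma card_img_le: "finite S \<Longrightarrow> card (img d S w) \<le> card S"
  by (simp add: img_def card_image_le)
lemma finite_img: "finite S \<Longrightarrow> finite (img d S w)"
  by (simp add: img_def)

locale aut =
  fixes Q :: "'q set" and Sig :: "'s set" and delta :: "'q \<Rightarrow> 's \<Rightarrow> 'q" and a :: 's
  assumes dfa: "dfa Q Sig delta" and sync: "synchronizing Q Sig delta" and aS: "a \<in> Sig"
begin

definition "nQ = card Q"
definition "Om = img delta Q [a]"
definition "Gl = {u @ [a] | u. set u \<subseteq> Sig \<and> length u \<le> nQ - 1}"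

lemma finQ: "finite Q" and neQ: "Q \<noteq> {}" using dfa by (auto simp: dfa_def)
lemma nQ1: "nQ \<ge> 1" using finQ neQ by (simp add: nQ_def Suc_le_eq card_gt_0_iff)

lemma Om_sub: "Om \<subseteq> Q"
  using dfa aS by (auto simp: Om_def img_def dfa_def)
lemma finOm: "finite Om" using Om_sub finQ finite_subset by blast

lemma Gl_word: "g \<in> Gl \<Longrightarrow> set g \<subseteq> Sig \<and> length g \<le> nQ"
  using aS nQ1 by (auto simp: Gl_def)

lemma Gls_word: "ws \<in> lists Gl \<Longrightarrow> set (concat ws) \<subseteq> Sig \<and> length (concat ws) \<le> nQ * length ws"
proof (induction ws)
  case Nil then show ?case by simp
next
  case (Cons g ws)
  then show ?case using Gl_word[of g] by auto
qed

lemma Gl_img: "S \<subseteq> Q \<Longrightarrow> g \<in> Gl \<Longrightarrow> img delta S g \<subseteq> Om"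
proof -
  assume S: "S \<subseteq> Q" and g: "g \<in> Gl"
  then obtain u where u: "g = u @ [a]" "set u \<subseteq> Sig" by (auto simp: Gl_def)
  have "img delta S u \<subseteq> Q" using S u dw_in[OF dfa] by (auto simp: img_def)
  hence "img delta (img delta S u) [a] \<subseteq> Om" unfolding Om_def by (rule img_mono)
  thus ?thesis by (simp add: u img_append)
qed

lemma Gls_img: "S \<subseteq> Om \<Longrightarrow> ws \<in> lists Gl \<Longrightarrow> img delta S (concat ws) \<subseteq> Om"
proof (induction ws arbitrary: S)
  case Nil then show ?case by simp
next
  case (Cons g ws)
  have "img delta S g \<subseteq> Om" using Cons.prems Om_sub Gl_img by auto
  then show ?case using Cons by (simp add: img_append)
qed

end

locale kry = aut Q Sig delta a for Q :: "'q set" and Sig :: "'s set" and delta a +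
  fixes ws0
  assumes ws0: "ws0 \<in> lists Gl"
    and minr: "\<And>ws. ws \<in> lists Gl \<Longrightarrow> card (img delta Om (concat ws0)) \<le> card (img delta Om (concat ws))"
    and rho2: "card (img delta Om (concat ws0)) \<ge> 2"
begin

definition "g0 = concat ws0"
definition "Im0 = img delta Om g0"
definition "rho = card Im0"
definition "Fam = {img delta Im0 (concat h) | h. h \<in> lists Gl}"

lemma finIm0: "finite Im0" by (simp add: Im0_def finOm finite_img)
lemma Im0_sub: "Im0 \<subseteq> Om" using Gls_img[OF order_refl ws0] by (simp add: Im0_def g0_def)

lemma Fam: assumes "J \<in> Fam" shows "card J = rho" "J \<subseteq> Om" "card (img delta J g0) = rho"
proof -
  obtain h where h: "h \<in> lists Gl" "J = img delta Im0 (concat h)" using assms by (auto simp: Fam_def)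
  have l1: "card J \<ge> rho"
    using minr[of "ws0 @ h"] ws0 h by (simp add: rho_def Im0_def g0_def img_append)
  have l2: "card J \<le> rho" using h finIm0 by (simp add: rho_def card_img_le)
  show "card J = rho" using l1 l2 by simp
  show "J \<subseteq> Om" using h Gls_img[OF Im0_sub] by simp
  have "card (img delta J g0) \<ge> rho"
    using minr[of "ws0 @ h @ ws0"] ws0 h by (simp add: rho_def Im0_def g0_def img_append)
  moreover have "card (img delta J g0) \<le> card J"
    using h finIm0 by (simp add: card_img_le finite_img)
  ultimately show "card (img delta J g0) = rho" using l2 by simp
qed

lemma Fam_step: "J \<in> Fam \<Longrightarrow> set u \<subseteq> Sig \<Longrightarrow> length u \<le> nQ - 1 \<Longrightarrow> img delta J (u@[a]) \<in> Fam"
proof -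
  assume "J \<in> Fam" "set u \<subseteq> Sig" "length u \<le> nQ - 1"
  then obtain h where h: "h \<in> lists Gl" "J = img delta Im0 (concat h)" by (auto simp: Fam_def)
  have "u @ [a] \<in> Gl" using \<open>set u \<subseteq> Sig\<close> \<open>length u \<le> nQ - 1\<close> by (auto simp: Gl_def)
  hence "h @ [u @ [a]] \<in> lists Gl" using h by simp
  moreover have "img delta J (u@[a]) = img delta Im0 (concat (h @ [u @ [a]]))"
    by (simp add: h img_append)
  ultimately show ?thesis unfolding Fam_def by blast
qed

lemma Im0_Fam: "Im0 \<in> Fam" unfolding Fam_def by (rule CollectI, rule exI[of _ "[]"]) simp

end


context kry
begin

definition psi :: "'q \<Rightarrow> 'q \<Rightarrow> real" where
  "psi y = (\<lambda>p. if p \<in> Q then (if delta_word delta p (a # g0) = y then 1 else 0) - 1 / real rho else 0)"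
definition Mop :: "'s list \<Rightarrow> ('q \<Rightarrow> real) \<Rightarrow> 'q \<Rightarrow> real" where
  "Mop u f = (\<lambda>q. if q \<in> Q then f (delta_word delta q u) else 0)"

lemma Mop_psi: "q \<in> Q \<Longrightarrow> set u \<subseteq> Sig \<Longrightarrow>
   Mop u (psi y) q = (if delta_word delta q (u @ a # g0) = y then 1 else 0) - 1 / real rho"
  using dw_in[OF dfa] by (simp add: Mop_def psi_def dw_append)

lemma Mop_Cons: "x \<in> Sig \<Longrightarrow> Mop (x#u) f = Mop [x] (Mop u f)"
  using dfa by (auto simp: Mop_def fun_eq_iff dfa_def)

lemma linear_Mop: "linear (Mop u)"
  by (rule linearI) (auto simp: Mop_def fun_eq_iff scaleR_fun_def)

lemma linear_ell: "linear (\<lambda>f::'q \<Rightarrow> real. \<Sum>j\<in>J. f j)"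
  by (rule linearI) (auto simp: sum.distrib scaleR_fun_def sum_distrib_left)

definition "Gen j = {Mop u (psi y) | u y. set u \<subseteq> Sig \<and> length u \<le> j \<and> y \<in> Im0}"
definition "W j = span (Gen j)"

lemma rho_pos: "rho \<ge> 2" using rho2 by (simp add: rho_def Im0_def g0_def)

lemma ell_zero:
  assumes J: "J \<in> Fam" and u: "set u \<subseteq> Sig" "length u \<le> nQ - 1" and y: "y \<in> Im0"
  shows "(\<Sum>j\<in>J. Mop u (psi y) j) = 0"
proof -
  define ph where "ph j = delta_word delta j (u @ a # g0)" for j
  have J': "img delta J (u@[a]) \<in> Fam" using Fam_step[OF J u] .
  have imgeq: "ph ` J = img delta (img delta J (u@[a])) g0"
    by (simp add: ph_def img_def image_image dw_append[symmetric])
  have cJ: "card J = rho" and JO: "J \<subseteq> Om" using Fam[OF J] by auto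
  have finJ: "finite J" using JO finOm finite_subset by blast
  have c2: "card (ph ` J) = rho" using imgeq Fam(3)[OF J'] by simp
  have inj: "inj_on ph J" using eq_card_imp_inj_on[OF finJ] c2 cJ by simp
  have sub: "ph ` J \<subseteq> Im0"
    unfolding imgeq Im0_def by (rule img_mono, rule Fam(2)[OF J'])
  have eqI: "ph ` J = Im0" using card_subset_eq[OF finIm0 sub] c2 by (simp add: rho_def)
  have JQ: "J \<subseteq> Q" using JO Om_sub by auto
  have "(\<Sum>j\<in>J. Mop u (psi y) j) = (\<Sum>j\<in>J. (if ph j = y then 1 else 0) - 1 / real rho)"
    using JQ u by (intro sum.cong) (auto simp: Mop_psi ph_def)
  also have "\<dots> = (\<Sum>j\<in>J. (if ph j = y then 1 else 0)) - real (card J) / real rho"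
    by (simp add: sum_subtractf)
  also have "(\<Sum>j\<in>J. (if ph j = y then 1 else 0::real)) = (\<Sum>z\<in>ph ` J. (if z = y then 1 else 0))"
    by (simp add: sum.reindex[OF inj])
  also have "\<dots> = 1" using y eqI finIm0 by simp
  finally show ?thesis using cJ rho_pos by simp
qed

lemma Gen_mono: "i \<le> j \<Longrightarrow> Gen i \<subseteq> Gen j"
  unfolding Gen_def using le_trans by blast
lemma W_mono: "i \<le> j \<Longrightarrow> W i \<subseteq> W j"
  unfolding W_def by (intro span_mono Gen_mono)

lemma W_rec: "W (Suc j) = span (Gen 0 \<union> (\<Union>x\<in>Sig. Mop [x] ` W j))"
proof
  show "W (Suc j) \<subseteq> span (Gen 0 \<union> (\<Union>x\<in>Sig. Mop [x] ` W j))"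
    unfolding W_def
  proof (rule span_mono[THEN subset_trans[OF _ order_refl]], rule subsetI)
    fix v assume "v \<in> Gen (Suc j)"
    then obtain u y where v: "v = Mop u (psi y)" "set u \<subseteq> Sig" "length u \<le> Suc j" "y \<in> Im0"
      by (auto simp: Gen_def)
    show "v \<in> Gen 0 \<union> (\<Union>x\<in>Sig. Mop [x] ` span (Gen j))"
    proof (cases u)
      case Nil
      then show ?thesis using v by (auto simp: Gen_def)
    next
      case (Cons x u')
      have "Mop u' (psi y) \<in> Gen j" using v Cons by (auto simp: Gen_def)
      hence "Mop u' (psi y) \<in> span (Gen j)" by (rule span_base)
      moreover have xS: "x \<in> Sig" using v Cons by auto
      moreover have "v = Mop [x] (Mop u' (psi y))" using v(1) Cons Mop_Cons[OF xS, of u' "psi y"] by simp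
      ultimately show ?thesis by blast
    qed
  qed
next
  have "Gen 0 \<union> (\<Union>x\<in>Sig. Mop [x] ` W j) \<subseteq> W (Suc j)"
  proof -
    have "Gen 0 \<subseteq> W (Suc j)" unfolding W_def using Gen_mono[of 0 "Suc j"] span_superset by blast
    moreover have "Mop [x] ` W j \<subseteq> W (Suc j)" if x: "x \<in> Sig" for x
    proof -
      have "Mop [x] ` W j = span (Mop [x] ` Gen j)"
        unfolding W_def using span_linear_image[OF linear_Mop] by simp
      also have "Mop [x] ` Gen j \<subseteq> Gen (Suc j)"
      proof
        fix v assume "v \<in> Mop [x] ` Gen j"
        then obtain u y where "v = Mop [x] (Mop u (psi y))" "set u \<subseteq> Sig" "length u \<le> j" "y \<in> Im0"
          by (auto simp: Gen_def)
        thus "v \<in> Gen (Suc j)" using x Mop_Cons[of x u "psi y"] unfolding Gen_def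
          by (intro CollectI exI[of _ "x#u"] exI[of _ y]) auto
      qed
      hence "span (Mop [x] ` Gen j) \<subseteq> W (Suc j)" unfolding W_def by (rule span_mono)
      finally show ?thesis .
    qed
    ultimately show ?thesis by blast
  qed
  hence "span (Gen 0 \<union> (\<Union>x\<in>Sig. Mop [x] ` W j)) \<subseteq> span (W (Suc j))" by (rule span_mono)
  also have "\<dots> = W (Suc j)" unfolding W_def by simp
  finally show "span (Gen 0 \<union> (\<Union>x\<in>Sig. Mop [x] ` W j)) \<subseteq> W (Suc j)" .
qed

lemma W_stable: "W (Suc j) = W j \<Longrightarrow> W (j + i) = W j"
proof (induction i)
  case 0 then show ?case by simp
next
  case (Suc i)
  have "W (Suc (j + i)) = span (Gen 0 \<union> (\<Union>x\<in>Sig. Mop [x] ` W (j + i)))" by (rule W_rec)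
  also have "\<dots> = span (Gen 0 \<union> (\<Union>x\<in>Sig. Mop [x] ` W j))" using Suc by simp
  also have "\<dots> = W (Suc j)" by (rule W_rec[symmetric])
  finally show ?case using Suc by simp
qed

definition "Ebas = (\<lambda>q. (\<lambda>p. if p = q then 1 else 0::real)) ` Q"

lemma supp_span: "(\<forall>p. p \<notin> Q \<longrightarrow> f p = 0) \<Longrightarrow> f \<in> span Ebas"
proof -
  assume h: "\<forall>p. p \<notin> Q \<longrightarrow> f p = 0"
  have "f = (\<Sum>q\<in>Q. f q *\<^sub>R (\<lambda>p. if p = q then 1 else 0::real))"
  proof
    fix p
    have "(\<Sum>q\<in>Q. f q *\<^sub>R (\<lambda>p. if p = q then 1 else 0::real)) p = (\<Sum>q\<in>Q. if p = q then f q else 0)"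
      by (simp add: fun_sum_apply scaleR_fun_def, rule sum.cong, auto)
    also have "\<dots> = (if p \<in> Q then f p else 0)" using finQ by (simp add: sum.delta)
    finally show "f p = (\<Sum>q\<in>Q. f q *\<^sub>R (\<lambda>p. if p = q then 1 else 0::real)) p"
      using h by auto
  qed
  also have "\<dots> \<in> span Ebas"
    by (intro span_sum span_scale span_base) (auto simp: Ebas_def)
  finally show ?thesis .
qed

lemma W_sub: "W j \<subseteq> span Ebas"
proof -
  have "Gen j \<subseteq> span Ebas"
    by (auto simp: Gen_def Mop_def intro!: supp_span)
  hence "span (Gen j) \<subseteq> span (span Ebas)" by (rule span_mono)
  thus ?thesis by (simp add: W_def span_span)
qed

lemma psi_nonzero: "\<exists>v\<in>W 0. v \<noteq> 0"
proof -
  have "Im0 \<noteq> {}" using rho_pos by (auto simp: rho_def)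
  then obtain y where y: "y \<in> Im0" by blast
  then obtain p where p: "p \<in> Om" "y = delta_word delta p g0" by (auto simp: Im0_def img_def)
  then obtain q where q: "q \<in> Q" "p = delta q a" by (auto simp: Om_def img_def)
  have "psi y q = 1 - 1 / real rho" using q p by (simp add: psi_def)
  moreover have "1 - 1 / real rho \<noteq> 0" using rho_pos by simp
  ultimately have "psi y \<noteq> 0" by auto
  moreover have "psi y \<in> W 0"
    unfolding W_def Gen_def using y
    by (intro span_base CollectI exI[of _ "[]"] exI[of _ y]) (auto simp: Mop_def psi_def fun_eq_iff)
  ultimately show ?thesis by blast
qed

lemma exists_stable: "\<exists>j\<le>nQ - 1. W (Suc j) = W j"
proof (rule ccontr)
  assume ns: "\<not> ?thesis"
  have "\<exists>T. independent T \<and> finite T \<and> T \<subseteq> W j \<and> card T = Suc j" if "j \<le> nQ" for j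
    using that
  proof (induction j)
    case 0
    obtain v where v: "v \<in> W 0" "v \<noteq> 0" using psi_nonzero by blast
    have "independent {v}" using v independent_insertI[of v "{}"] span_empty by auto
    then show ?case using v by (intro exI[of _ "{v}"]) auto
  next
    case (Suc j)
    then obtain T where T: "independent T" "finite T" "T \<subseteq> W j" "card T = Suc j" by auto
    have "W (Suc j) \<noteq> W j" using ns Suc.prems by auto
    moreover have "W j \<subseteq> W (Suc j)" by (rule W_mono) simp
    ultimately obtain v where v: "v \<in> W (Suc j)" "v \<notin> W j" by blast
    have "span T \<subseteq> W j"
    proof -
      have "span T \<subseteq> span (W j)" using T(3) by (rule span_mono)
      thus ?thesis by (simp add: W_def span_span)
    qed
    hence vT: "v \<notin> span T" using v by blast
    hence "v \<notin> T" using span_superset by blast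
    moreover have "insert v T \<subseteq> W (Suc j)" using T(3) v W_mono[of j "Suc j"] by auto
    ultimately show ?case using independent_insertI[OF vT T(1)] T
      by (intro exI[of _ "insert v T"]) auto
  qed
  then obtain T where T: "independent T" "finite T" "T \<subseteq> W nQ" "card T = Suc nQ" by blast
  have fE: "finite Ebas" using finQ by (simp add: Ebas_def)
  have "card T \<le> card Ebas" using independent_span_bound[OF fE T(1)] T(3) W_sub by blast
  also have "card Ebas \<le> nQ" unfolding Ebas_def nQ_def by (rule card_image_le[OF finQ])
  finally show False using T(4) by simp
qed

lemma krylov: "set u \<subseteq> Sig \<Longrightarrow> y \<in> Im0 \<Longrightarrow> Mop u (psi y) \<in> W (nQ - 1)"
proof -
  assume u: "set u \<subseteq> Sig" and y: "y \<in> Im0"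
  obtain j where j: "j \<le> nQ - 1" "W (Suc j) = W j" using exists_stable by blast
  have "Mop u (psi y) \<in> W (length u)"
    unfolding W_def Gen_def using u y by (intro span_base) auto
  moreover have "W (length u) \<subseteq> W (nQ - 1)"
  proof (cases "length u \<le> nQ - 1")
    case True then show ?thesis by (rule W_mono)
  next
    case False
    have "W (length u) = W (j + (length u - j))" using j False by simp
    also have "\<dots> = W j" by (rule W_stable[OF j(2)])
    also have "\<dots> \<subseteq> W (nQ - 1)" using j by (intro W_mono) simp
    finally show ?thesis .
  qed
  ultimately show ?thesis by blast
qed

theorem contra: False
proof -
  obtain z where z: "set z \<subseteq> Sig" "card (img delta Q z) = 1"
    using sync by (auto simp: synchronizing_def reset_word_def rank_def image_word_def img_def)
  then obtain t where t: "img delta Q z = {t}" using card_1_singletonE by blast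
  obtain q0 where q0: "q0 \<in> Q" using neQ by blast
  have "delta_word delta q0 z \<in> img delta Q z" using q0 by (simp add: img_def)
  hence "delta_word delta q0 z = t" using t by simp
  hence tQ: "t \<in> Q" using dw_in[OF dfa q0 z(1)] by simp
  define y where "y = delta_word delta t (a # g0)"
  have yI: "y \<in> Im0"
    using tQ by (auto simp: y_def Im0_def Om_def img_def intro!: imageI)
  have "(\<Sum>j\<in>Im0. Mop z (psi y) j) = 0"
    by (rule vanish_span[OF linear_ell _ krylov[OF z(1) yI, unfolded W_def]])
       (auto simp: Gen_def intro: ell_zero[OF Im0_Fam])
  moreover have "(\<Sum>j\<in>Im0. Mop z (psi y) j) = (\<Sum>j\<in>Im0. 1 - 1 / real rho)"
  proof (intro sum.cong refl)
    fix j assume j: "j \<in> Im0"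
    hence jQ: "j \<in> Q" using Im0_sub Om_sub by auto
    have "delta_word delta j z = t" using t jQ by (auto simp: img_def)
    thus "Mop z (psi y) j = 1 - 1 / real rho"
      using Mop_psi[OF jQ z(1)] by (simp add: dw_append y_def)
  qed
  moreover have "(\<Sum>j\<in>Im0. 1 - 1 / real rho) = real rho - 1"
    using rho_pos by (simp add: rho_def[symmetric] field_simps)
  ultimately show False using rho_pos by simp
qed

end


lemma card_merge_less:
  assumes "finite A" "x \<in> A" "y \<in> A" "x \<noteq> y" "f x = f y"
  shows "card (f ` A) < card A"
proof -
  have "card (f ` A) \<le> card A" using assms(1) by (rule card_image_le)
  moreover have "card (f ` A) \<noteq> card A"
  proof
    assume "card (f ` A) = card A"
    hence "inj_on f A" using eq_card_imp_inj_on[OF assms(1)] by simp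
    thus False using assms by (auto simp: inj_on_def)
  qed
  ultimately show ?thesis by simp
qed

context aut
begin

lemma partA: "\<exists>ws\<in>lists Gl. card (img delta Om (concat ws)) = 1"
proof -
  obtain ws0 where ws0: "ws0 \<in> lists Gl"
    and mn: "\<And>ws. ws \<in> lists Gl \<Longrightarrow> card (img delta Om (concat ws0)) \<le> card (img delta Om (concat ws))"
    using ex_has_least_nat[of "\<lambda>ws. ws \<in> lists Gl" "[]" "\<lambda>ws. card (img delta Om (concat ws))"]
    by auto
  have ne: "Om \<noteq> {}" using neQ by (simp add: Om_def img_def)
  have "img delta Om (concat ws0) \<noteq> {}" using ne by (simp add: img_def)
  hence c1: "card (img delta Om (concat ws0)) \<ge> 1"
    using finOm by (simp add: Suc_le_eq card_gt_0_iff finite_img)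
  show ?thesis
  proof (cases "card (img delta Om (concat ws0)) \<ge> 2")
    case True
    interpret K: kry Q Sig delta a ws0
      by (unfold_locales) (use ws0 mn True in auto)
    show ?thesis using K.contra by simp
  next
    case False
    then show ?thesis using c1 ws0 by (intro bexI[of _ ws0]) auto
  qed
qed

lemma compress:
  assumes S: "S \<subseteq> Om" and k: "card S = k" "k \<ge> 2"
  shows "\<exists>ws\<in>lists Gl. card (img delta S (concat ws)) < k \<and> length ws \<le> (card Om - k + 2) choose 2"
proof -
  have finS: "finite S" using S finOm finite_subset by blast
  obtain ws1 where ws1: "ws1 \<in> lists Gl" "card (img delta Om (concat ws1)) = 1" using partA by blast
  have "card (img delta S (concat ws1)) \<le> card (img delta Om (concat ws1))"
    by (rule card_mono[OF finite_img[OF finOm] img_mono[OF S]])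
  hence P1: "card (img delta S (concat ws1)) < k" using ws1 k by simp
  obtain ws where ws: "ws \<in> lists Gl" "card (img delta S (concat ws)) < k"
    and wmin: "\<And>ws'. ws' \<in> lists Gl \<and> card (img delta S (concat ws')) < k \<Longrightarrow> length ws \<le> length ws'"
    using ex_has_least_nat[of "\<lambda>ws. ws \<in> lists Gl \<and> card (img delta S (concat ws)) < k" ws1 length]
      ws1 P1 by blast
  define m where "m = length ws"
  define Si where "Si i = img delta S (concat (take i ws))" for i
  have tk: "take i ws \<in> lists Gl" for i using ws(1) by (auto simp: in_lists_conv_set dest: in_set_takeD)
  have dr: "drop i ws \<in> lists Gl" for i using ws(1) by (auto simp: in_lists_conv_set dest: in_set_dropD)
  have SiO: "Si i \<subseteq> Om" for i unfolding Si_def by (rule Gls_img[OF S tk])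
  have finSi: "finite (Si i)" for i using SiO finOm finite_subset by blast
  have cSi: "card (Si i) = k" if "i < m" for i
  proof -
    have "card (Si i) \<le> k" using card_img_le[OF finS] k by (simp add: Si_def)
    moreover have "\<not> card (Si i) < k"
    proof
      assume "card (Si i) < k"
      hence "length ws \<le> length (take i ws)" using wmin[of "take i ws"] tk by (simp add: Si_def)
      thus False using that by (simp add: m_def)
    qed
    ultimately show ?thesis by simp
  qed
  have split: "img delta (Si i) (concat (drop i ws)) = img delta S (concat ws)" for i
    unfolding Si_def img_append[symmetric] concat_append[symmetric] by simp
  have "\<forall>i. \<exists>p. i < m \<longrightarrow> fst p \<in> Si i \<and> snd p \<in> Si i \<and> fst p \<noteq> snd p \<and>
      delta_word delta (fst p) (concat (drop i ws)) = delta_word delta (snd p) (concat (drop i ws))"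
  proof
    fix i
    show "\<exists>p. i < m \<longrightarrow> fst p \<in> Si i \<and> snd p \<in> Si i \<and> fst p \<noteq> snd p \<and>
      delta_word delta (fst p) (concat (drop i ws)) = delta_word delta (snd p) (concat (drop i ws))"
    proof (cases "i < m")
      case True
      have "card (img delta (Si i) (concat (drop i ws))) < card (Si i)"
        using split[of i] ws(2) cSi[OF True] by simp
      hence "\<not> inj_on (\<lambda>q. delta_word delta q (concat (drop i ws))) (Si i)"
        by (auto simp: img_def card_image)
      then obtain x y where "x \<in> Si i" "y \<in> Si i" "x \<noteq> y"
        "delta_word delta x (concat (drop i ws)) = delta_word delta y (concat (drop i ws))"
        by (auto simp: inj_on_def)
      then show ?thesis by (intro exI[of _ "(x,y)"]) auto
    qed auto
  qed
  then obtain F where F: "\<And>i. i < m \<Longrightarrow> fst (F i) \<in> Si i \<and> snd (F i) \<in> Si i \<and> fst (F i) \<noteq> snd (F i) \<and>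
      delta_word delta (fst (F i)) (concat (drop i ws)) = delta_word delta (snd (F i)) (concat (drop i ws))"
    by (metis choice)
  define X where "X i = fst (F i)" for i
  define Y where "Y i = snd (F i)" for i
  have tri: "X j \<notin> Si i \<or> Y j \<notin> Si i" if ij: "i < j" "j < m" for i j
  proof (rule ccontr)
    assume "\<not> (X j \<notin> Si i \<or> Y j \<notin> Si i)"
    hence in2: "X j \<in> Si i" "Y j \<in> Si i" by auto
    define ws' where "ws' = take i ws @ drop j ws"
    have w'G: "ws' \<in> lists Gl" using tk dr by (simp add: ws'_def)
    have "img delta S (concat ws') = img delta (Si i) (concat (drop j ws))"
      by (simp add: ws'_def Si_def img_append)
    moreover have "card (img delta (Si i) (concat (drop j ws))) < card (Si i)"
      unfolding img_def
      by (rule card_merge_less[OF finSi in2]) (use F[OF ij(2)] in \<open>auto simp: X_def Y_def\<close>)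
    ultimately have "card (img delta S (concat ws')) < k" using cSi ij by simp
    hence "length ws \<le> length ws'" using wmin w'G by blast
    moreover have "length ws' < length ws" using ij by (simp add: ws'_def m_def)
    ultimately show False by simp
  qed
  have "m \<le> ((card Om - k) + 2) choose 2"
  proof (rule pin[OF finOm, of m X Y "\<lambda>i. Om - Si i" "card Om - k"])
    fix i assume i: "i < m"
    have "card (Om - Si i) = card Om - card (Si i)" using SiO finSi by (simp add: card_Diff_subset)
    thus "X i \<in> Om \<and> Y i \<in> Om \<and> Om - Si i \<subseteq> Om \<and> card (Om - Si i) = card Om - k \<and> X i \<notin> Om - Si i \<and> Y i \<notin> Om - Si i"
      using F[OF i] SiO cSi[OF i] by (auto simp: X_def Y_def)
  next
    fix i j assume "i < j" "j < m"
    moreover have "X j \<in> Om" "Y j \<in> Om" using F[OF \<open>j < m\<close>] SiO by (auto simp: X_def Y_def)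
    ultimately show "X j \<in> Om - Si i \<or> Y j \<in> Om - Si i" using tri by blast
  qed
  thus ?thesis using ws by (intro bexI[of _ ws]) (auto simp: m_def)
qed

lemma reduce:
  "S \<subseteq> Om \<Longrightarrow> card S = k \<Longrightarrow> k \<ge> 1 \<Longrightarrow>
   \<exists>w. set w \<subseteq> Sig \<and> card (img delta S w) = 1 \<and> length w \<le> nQ * (\<Sum>j\<in>{2..k}. (card Om - j + 2) choose 2)"
proof (induction k arbitrary: S rule: less_induct)
  case (less k)
  show ?case
  proof (cases "k = 1")
    case True
    then show ?thesis using less.prems by (intro exI[of _ "[]"]) auto
  next
    case False
    hence k2: "k \<ge> 2" using less.prems by simp
    obtain ws where ws: "ws \<in> lists Gl" "card (img delta S (concat ws)) < k"
      "length ws \<le> (card Om - k + 2) choose 2"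
      using compress[OF less.prems(1,2) k2] by blast
    define S' where "S' = img delta S (concat ws)"
    have finS: "finite S" using less.prems finOm finite_subset by blast
    have "S \<noteq> {}" using less.prems by auto
    hence "S' \<noteq> {}" by (simp add: S'_def img_def)
    hence k1: "card S' \<ge> 1" using finS by (simp add: S'_def Suc_le_eq card_gt_0_iff finite_img)
    have S'O: "S' \<subseteq> Om" unfolding S'_def by (rule Gls_img[OF less.prems(1) ws(1)])
    obtain w2 where w2: "set w2 \<subseteq> Sig" "card (img delta S' w2) = 1"
      "length w2 \<le> nQ * (\<Sum>j\<in>{2..card S'}. (card Om - j + 2) choose 2)"
      using less.IH[OF ws(2)[folded S'_def] S'O refl k1] by blast
    have w1: "set (concat ws) \<subseteq> Sig" "length (concat ws) \<le> nQ * length ws"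
      using Gls_word[OF ws(1)] by auto
    have sub: "(\<Sum>j\<in>{2..card S'}. (card Om - j + 2) choose 2) \<le> (\<Sum>j\<in>{2..k-1}. (card Om - j + 2) choose 2)"
      using ws(2) by (intro sum_mono2) (auto simp: S'_def)
    have ins: "{2..k} = insert k {2..k-1}" using k2 by auto
    have "(\<Sum>j\<in>{2..k}. (card Om - j + 2) choose 2) = ((card Om - k + 2) choose 2) + (\<Sum>j\<in>{2..k-1}. (card Om - j + 2) choose 2)"
      unfolding ins by (subst sum.insert) auto
    moreover have "nQ * length ws \<le> nQ * ((card Om - k + 2) choose 2)"
      by (rule mult_le_mono2[OF ws(3)])
    moreover have "nQ * (\<Sum>j\<in>{2..card S'}. (card Om - j + 2) choose 2) \<le> nQ * (\<Sum>j\<in>{2..k-1}. (card Om - j + 2) choose 2)"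
      by (rule mult_le_mono2[OF sub])
    ultimately have "length (concat ws @ w2) \<le> nQ * (\<Sum>j\<in>{2..k}. (card Om - j + 2) choose 2)"
      using w1(2) w2(3) by (simp only: length_append distrib_left)
    moreover have "card (img delta S (concat ws @ w2)) = 1" using w2 by (simp add: img_append S'_def)
    ultimately show ?thesis using w1(1) w2(1) by (intro exI[of _ "concat ws @ w2"]) auto
  qed
qed

end


lemma two_choose: "2 * (n choose 2) = n * (n - 1)"
proof (induction n)
  case 0 then show ?case by simp
next
  case (Suc n)
  have "Suc n choose 2 = n + (n choose 2)"
    by (simp add: numeral_2_eq_2)
  then show ?case using Suc by (cases n) (auto simp: algebra_simps)
qed

lemma sum_rev: "(\<Sum>j\<in>{2..r}. (r - j + 2) choose 2) = (\<Sum>i\<in>{2..(r::nat)}. i choose 2)"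
proof -
  have "(\<Sum>j\<in>{2..r}. (r - j + 2) choose 2) = (\<Sum>i\<in>{2..r}. (r - (r + 2 - i) + 2) choose 2)"
    by (rule sum.atLeastAtMost_rev)
  also have "\<dots> = (\<Sum>i\<in>{2..r}. i choose 2)"
  proof (rule sum.cong[OF refl])
    fix i assume "i \<in> {2..r}"
    hence h: "r - (r + 2 - i) + 2 = i" by auto
    show "(r - (r + 2 - i) + 2) choose 2 = i choose 2" by (simp only: h)
  qed
  finally show ?thesis .
qed

lemma six_sum: "6 * (\<Sum>i\<in>{2..(r::nat)}. i choose 2) + r = r ^ 3"
proof (induction r)
  case 0 then show ?case by simp
next
  case (Suc r)
  show ?case
  proof (cases "r = 0")
    case True then show ?thesis by simp
  next
    case False
    have ins: "{2..Suc r} = insert (Suc r) {2..r}" using False by auto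
    have "(\<Sum>i\<in>{2..Suc r}. i choose 2) = (Suc r choose 2) + (\<Sum>i\<in>{2..r}. i choose 2)"
      unfolding ins by (subst sum.insert) auto
    moreover have "2 * (Suc r choose 2) = Suc r * r" using two_choose[of "Suc r"] by simp
    ultimately show ?thesis using Suc.IH
      by (simp add: eval_nat_numeral algebra_simps)
  qed
qed

lemma final_arith:
  fixes r n c :: nat
  assumes r2: "r \<ge> 2" and c: "6 * c + r = r ^ 3" and rn: "r ^ 3 + 6 \<le> 6 * n"
  shows "1 + n * c \<le> (n - 1)\<^sup>2"
proof -
  have "6 * c + 2 \<le> 6 * n - 6" using c rn r2 by linarith
  hence cn: "c + 2 \<le> n" by linarith
  define m where "m = n - 2"
  have m: "n = Suc (Suc m)" using cn by (simp add: m_def)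
  have "n * c \<le> n * m" using cn m by (intro mult_le_mono2) simp
  moreover have "(n - 1)\<^sup>2 = n * m + 1" by (simp add: m power2_eq_square algebra_simps)
  ultimately show ?thesis by simp
qed

theorem corollary1:
  fixes Q :: "'q set" and Sig :: "'s set" and delta :: "'q \<Rightarrow> 's \<Rightarrow> 'q"
    and n :: nat and a :: 's
  assumes "dfa Q Sig delta"
    and "synchronizing Q Sig delta"
    and "card Q = n"
    and "a \<in> Sig"
    and "real (rank Q delta [a]) \<le> root 3 (6 * real n - 6)"
  shows "rt Q Sig delta \<le> (n - 1)\<^sup>2"
proof -
  interpret A: aut Q Sig delta a using assms by unfold_locales auto
  have nQ: "A.nQ = n" by (simp add: A.nQ_def assms(3))
  define r where "r = card A.Om"
  have r_eq: "rank Q delta [a] = r" by (simp add: rank_def image_word_def A.Om_def img_def r_def)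
  have rank_img: "rank Q delta w = card (img delta Q w)" for w
    by (simp add: rank_def image_word_def img_def)
  have rt_le: "rt Q Sig delta \<le> length w" if "reset_word Q Sig delta w" for w
    unfolding rt_def using that by (intro Least_le) blast
  have n1: "n \<ge> 1" using A.nQ1 nQ by simp
  have "A.Om \<noteq> {}" using A.neQ by (simp add: A.Om_def img_def)
  hence r1: "r \<ge> 1" using A.finOm by (simp add: r_def Suc_le_eq card_gt_0_iff)
  show ?thesis
  proof (cases "n = 1")
    case True
    have "reset_word Q Sig delta []" using assms(3) True by (simp add: reset_word_def rank_img)
    then show ?thesis using rt_le by fastforce
  next
    case False
    hence n2: "n \<ge> 2" using n1 by simp
    show ?thesis
    proof (cases "r = 1")
      case True
      have "reset_word Q Sig delta [a]" using assms(4) True r_eq by (simp add: reset_word_def)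
      hence "rt Q Sig delta \<le> 1" using rt_le by fastforce
      moreover have "1 \<le> (n - 1)\<^sup>2" using n2 by simp
      ultimately show ?thesis by simp
    next
      case False
      hence r2: "r \<ge> 2" using r1 by simp
      obtain w where w: "set w \<subseteq> Sig" "card (img delta A.Om w) = 1"
        "length w \<le> A.nQ * (\<Sum>j\<in>{2..r}. (card A.Om - j + 2) choose 2)"
        using A.reduce[OF order_refl refl r1[unfolded r_def]] by (auto simp: r_def)
      have "img delta Q (a # w) = img delta A.Om w"
        using img_append[of delta Q "[a]" w] by (simp add: A.Om_def)
      hence "reset_word Q Sig delta (a # w)"
        using w assms(4) by (simp add: reset_word_def rank_img)
      hence "rt Q Sig delta \<le> 1 + n * (\<Sum>i\<in>{2..r}. i choose 2)"
        using rt_le w(3) nQ sum_rev[of r] by (fastforce simp: r_def)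
      moreover have "r ^ 3 + 6 \<le> 6 * n"
      proof -
        have "6 * real n - 6 \<ge> 0" using n1 by simp
        have "real r ^ 3 \<le> (root 3 (6 * real n - 6)) ^ 3"
          using assms(5) r_eq by (intro power_mono) auto
        also have "\<dots> = 6 * real n - 6" using \<open>6 * real n - 6 \<ge> 0\<close> by simp
        finally have "real (r ^ 3 + 6) \<le> real (6 * n)" by simp
        thus ?thesis by (simp only: of_nat_le_iff)
      qed
      ultimately show ?thesis
        using final_arith[OF r2 six_sum[of r]] by (meson le_trans)
    qed
  qed
qed

end
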